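(* Let $G$ be a connected graph and let $e_i$ be an edge of $G$ with end points $p_i,q_i$. For any $s,t\in V(G)$, $$t(G)\,t\big((G-e_i)_{st}\big)=t(G_{st})\,t(G-e_i)+\frac14\big[t(G_{p_is})-t(G_{q_is})-t(G_{p_it})+t(G_{q_it})\big]^2.$$
   Context: Graphs are finite and may have multiple edges and loops; $t(H)$ is the number of spanning trees of $H$ ($0$ if $H$ is disconnected, $1$ if $H$ has one vertex). $G-e_i$ is $G$ with the edge $e_i$ deleted. For vertices $x,y$ of $H$, $H_{xy}$ is obtained by identifying $x$ and $y$, with the convention $t(H_{xx}):=0$. *)

theory Defs
  imports Complex_Main
begin

text \<open>A finite multigraph (loops and parallel edges allowed) is given by a vertex set V,
an edge set E and an endpoint map ends :: 'e => 'v * 'v (the order of the two endpoints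
is irrelevant: adjacency below is symmetric).\<close>

definition mgraph :: "'v set \<Rightarrow> 'e set \<Rightarrow> ('e \<Rightarrow> 'v \<times> 'v) \<Rightarrow> bool" where
  "mgraph V E ends \<longleftrightarrow> finite V \<and> finite E \<and>
     (\<forall>e\<in>E. fst (ends e) \<in> V \<and> snd (ends e) \<in> V)"

definition adj :: "'e set \<Rightarrow> ('e \<Rightarrow> 'v \<times> 'v) \<Rightarrow> 'v \<Rightarrow> 'v \<Rightarrow> bool" where
  "adj F ends u v \<longleftrightarrow> (\<exists>e\<in>F. ends e = (u, v) \<or> ends e = (v, u))"

definition reach :: "'e set \<Rightarrow> ('e \<Rightarrow> 'v \<times> 'v) \<Rightarrow> 'v \<Rightarrow> 'v \<Rightarrow> bool" where
  "reach F ends = (adj F ends)\<^sup>*\<^sup>*"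

definition connected_mg :: "'v set \<Rightarrow> 'e set \<Rightarrow> ('e \<Rightarrow> 'v \<times> 'v) \<Rightarrow> bool" where
  "connected_mg V F ends \<longleftrightarrow> V \<noteq> {} \<and> (\<forall>u\<in>V. \<forall>v\<in>V. reach F ends u v)"

text \<open>F is acyclic (a forest): no edge of F lies on a cycle, i.e. the endpoints of each
edge e of F are not joined by a walk in F - {e}.  (Loops are therefore excluded.)\<close>
definition acyclic_mg :: "'e set \<Rightarrow> ('e \<Rightarrow> 'v \<times> 'v) \<Rightarrow> bool" where
  "acyclic_mg F ends \<longleftrightarrow> (\<forall>e\<in>F. \<not> reach (F - {e}) ends (fst (ends e)) (snd (ends e)))"

definition spanning_tree :: "'v set \<Rightarrow> 'e set \<Rightarrow> ('e \<Rightarrow> 'v \<times> 'v) \<Rightarrow> 'e set \<Rightarrow> bool" where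
  "spanning_tree V E ends T \<longleftrightarrow> T \<subseteq> E \<and> connected_mg V T ends \<and> acyclic_mg T ends"

definition ntrees :: "'v set \<Rightarrow> 'e set \<Rightarrow> ('e \<Rightarrow> 'v \<times> 'v) \<Rightarrow> nat" where
  "ntrees V E ends = card {T. spanning_tree V E ends T}"

definition merge :: "'v \<Rightarrow> 'v \<Rightarrow> 'v \<Rightarrow> 'v" where
  "merge x y v = (if v = y then x else v)"

text \<open>t(H_xy), with the convention t(H_xx) = 0\<close>
definition ntrees_id :: "'v set \<Rightarrow> 'e set \<Rightarrow> ('e \<Rightarrow> 'v \<times> 'v) \<Rightarrow> 'v \<Rightarrow> 'v \<Rightarrow> nat" where
  "ntrees_id V E ends x y =
    (if x = y then 0
     else ntrees (merge x y ` V) E (\<lambda>e. map_prod (merge x y) (merge x y) (ends e)))"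

end

theory Submission
  imports Defs "Jordan_Normal_Form.Determinant"
begin

lemma adj_sym: "adj F ends u v = adj F ends v u" by (auto simp: adj_def)

lemma reach_refl[simp]: "reach F ends u u" by (simp add: reach_def)

lemma adj_reach: "adj F ends u v \<Longrightarrow> reach F ends u v" by (simp add: reach_def)

lemma reach_trans: "reach F ends u v \<Longrightarrow> reach F ends v w \<Longrightarrow> reach F ends u w"
  unfolding reach_def by (rule rtranclp_trans)

lemma reach_sym: "reach F ends u v \<Longrightarrow> reach F ends v u"
  unfolding reach_def
proof (induction rule: rtranclp_induct)
  case base then show ?case by simp
next
  case (step y z)
  then show ?case by (metis adj_sym converse_rtranclp_into_rtranclp)
qed

lemma reach_mono: assumes "F \<subseteq> F'" "reach F ends u v" shows "reach F' ends u v"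
  using assms(2) unfolding reach_def
proof (induction rule: rtranclp_induct)
  case base then show ?case by simp
next
  case (step y z)
  then have "adj F' ends y z" using assms(1) by (auto simp: adj_def)
  then show ?case using step by (meson rtranclp.rtrancl_into_rtrancl)
qed

lemma reach_last_exit:
  "reach F ends u v \<Longrightarrow> reach (F-{e}) ends u v \<or> reach (F-{e}) ends (fst (ends e)) v
     \<or> reach (F-{e}) ends (snd (ends e)) v"
  unfolding reach_def
proof (induction rule: converse_rtranclp_induct)
  case base then show ?case by simp
next
  case (step y z)
  show ?case
  proof (cases "adj (F-{e}) ends y z")
    case True
    then show ?thesis using step(3) by (meson converse_rtranclp_into_rtranclp)
  next
    case False
    then have "ends e = (y,z) \<or> ends e = (z,y)" using step(1) by (auto simp: adj_def)
    then show ?thesis using step(3) by auto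
  qed
qed

lemma first_edge:
  "finite T \<Longrightarrow> reach T ends a b \<Longrightarrow> a \<noteq> b \<Longrightarrow>
   \<exists>e\<in>T. \<exists>z. (ends e = (a,z) \<or> ends e = (z,a)) \<and> reach (T-{e}) ends z b"
proof (induction "card T" arbitrary: T rule: less_induct)
  case less
  from less.prems(2,3) obtain c where ac: "adj T ends a c" and cb: "reach T ends c b"
    unfolding reach_def by (metis converse_rtranclpE)
  from ac obtain e1 where e1: "e1 \<in> T" "ends e1 = (a,c) \<or> ends e1 = (c,a)"
    by (auto simp: adj_def)
  have "reach (T-{e1}) ends c b \<or> reach (T-{e1}) ends a b"
    using reach_last_exit[OF cb, of e1] e1(2) by auto
  then show ?case
  proof
    assume "reach (T-{e1}) ends c b" then show ?thesis using e1 by blast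
  next
    assume h: "reach (T-{e1}) ends a b"
    have cd: "card (T-{e1}) < card T" using card_Diff1_less[OF less.prems(1) e1(1)] .
    have fin: "finite (T-{e1})" using less.prems(1) by simp
    from less.hyps[OF cd fin h less.prems(3)]
    obtain e z where "e \<in> T-{e1}" "ends e = (a,z) \<or> ends e = (z,a)" "reach (T-{e1}-{e}) ends z b"
      by blast
    moreover have "T-{e1}-{e} \<subseteq> T-{e}" by auto
    ultimately have "reach (T-{e}) ends z b" "e \<in> T" "ends e = (a,z) \<or> ends e = (z,a)"
      using reach_mono[of "T-{e1}-{e}" "T-{e}" ends z b] by auto
    then show ?thesis by blast
  qed
qed

lemma reach_map:
  "reach T ends u v \<Longrightarrow> reach T (\<lambda>e. map_prod f f (ends e)) (f u) (f v)"
  unfolding reach_def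
proof (induction rule: rtranclp_induct)
  case base then show ?case by simp
next
  case (step y z)
  then have "adj T (\<lambda>e. map_prod f f (ends e)) (f y) (f z)"
    by (force simp: adj_def)
  then show ?case using step by (meson rtranclp.rtrancl_into_rtrancl)
qed

lemma reach_remove_loop:
  assumes "ends g = (z,z)" shows "reach (insert g T) ends a b \<Longrightarrow> reach T ends a b"
  unfolding reach_def
proof (induction rule: rtranclp_induct)
  case base then show ?case by simp
next
  case (step y w)
  show ?case
  proof (cases "adj T ends y w")
    case True then show ?thesis using step by (meson rtranclp.rtrancl_into_rtrancl)
  next
    case False
    then have "y = w" using step(2) assms by (auto simp: adj_def)
    then show ?thesis using step by simp
  qed
qed

lemma merge_eq_reach:
  assumes "g \<in> S" "ends g = (x,y) \<or> ends g = (y,x)" "merge x y a = merge x y b"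
  shows "reach S ends a b"
proof (cases "a = b")
  case True then show ?thesis by simp
next
  case False
  then have "(a = x \<and> b = y) \<or> (a = y \<and> b = x)" using assms(3) by (auto simp: merge_def split: if_splits)
  moreover have "adj S ends x y" using assms(1,2) by (auto simp: adj_def)
  ultimately show ?thesis by (metis adj_reach adj_sym)
qed

lemma RM1:
  assumes "ends g = (x,y) \<or> ends g = (y,x)" "reach (insert g T) ends u v"
  shows "reach T (\<lambda>e. map_prod (merge x y) (merge x y) (ends e)) (merge x y u) (merge x y v)"
proof -
  have "reach (insert g T) (\<lambda>e. map_prod (merge x y) (merge x y) (ends e)) (merge x y u) (merge x y v)"
    by (rule reach_map[OF assms(2)])
  moreover have "map_prod (merge x y) (merge x y) (ends g) = (x,x)" using assms(1)
    by (auto simp: merge_def)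
  ultimately show ?thesis using reach_remove_loop[of "\<lambda>e. map_prod (merge x y) (merge x y) (ends e)" g x]
    by blast
qed

lemma RM2:
  assumes g: "ends g = (x,y) \<or> ends g = (y,x)"
    and r: "reach T (\<lambda>e. map_prod (merge x y) (merge x y) (ends e)) U W"
  shows "merge x y u = U \<Longrightarrow> merge x y v = W \<Longrightarrow> reach (insert g T) ends u v"
  using r unfolding reach_def[of T]
proof (induction arbitrary: v rule: rtranclp_induct)
  case base
  then show ?case using merge_eq_reach[of g "insert g T" ends x y u v] g by auto
next
  case (step W' W)
  from step(2) obtain e where e: "e \<in> T"
    "map_prod (merge x y) (merge x y) (ends e) = (W',W) \<or> map_prod (merge x y) (merge x y) (ends e) = (W,W')"
    by (auto simp: adj_def)
  obtain a b where ab: "ends e = (a,b)" by fastforce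
  have ade: "adj (insert g T) ends a b" using e(1) ab by (auto simp: adj_def)
  show ?case
  proof (cases "merge x y a = W' \<and> merge x y b = W")
    case True
    have "reach (insert g T) ends u a" using step(3)[OF step(4)] True by simp
    moreover have "reach (insert g T) ends b v"
      using merge_eq_reach[of g "insert g T" ends x y b v] g True step(5) by auto
    ultimately show ?thesis using ade by (meson adj_reach reach_trans)
  next
    case False
    then have T2: "merge x y b = W' \<and> merge x y a = W" using e(2) ab by auto
    have "reach (insert g T) ends u b" using step(3)[OF step(4)] T2 by simp
    moreover have "reach (insert g T) ends a v"
      using merge_eq_reach[of g "insert g T" ends x y a v] g T2 step(5) by auto
    ultimately show ?thesis using ade by (meson adj_reach adj_sym reach_trans)
  qed
qed


lemma contract_tree:
  assumes gF: "g \<in> F" and g: "ends g = (x,y) \<or> ends g = (y,x)" and xy: "x \<noteq> y"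
    and TF: "T \<subseteq> F - {g}" and fin: "finite T"
  shows "spanning_tree V F ends (insert g T) =
         spanning_tree (merge x y ` V) (F - {g}) (\<lambda>e. map_prod (merge x y) (merge x y) (ends e)) T"
proof -
  let ?m = "merge x y"
  let ?me = "\<lambda>e. map_prod (merge x y) (merge x y) (ends e)"
  have gT: "g \<notin> T" using TF by auto
  have sub: "insert g T \<subseteq> F" using TF gF by auto
  have conn: "connected_mg V (insert g T) ends = connected_mg (?m ` V) T ?me"
  proof
    assume c: "connected_mg V (insert g T) ends"
    show "connected_mg (?m ` V) T ?me"
      unfolding connected_mg_def
    proof (intro conjI ballI)
      show "?m ` V \<noteq> {}" using c by (auto simp: connected_mg_def)
    next
      fix U W assume "U \<in> ?m ` V" "W \<in> ?m ` V"
      then obtain u v where uv: "u \<in> V" "v \<in> V" "U = ?m u" "W = ?m v" by auto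
      then have "reach (insert g T) ends u v" using c by (simp add: connected_mg_def)
      from RM1[where x=x and y=y and ends=ends and g=g, OF g this]
      show "reach T ?me U W" using uv by simp
    qed
  next
    assume c: "connected_mg (?m ` V) T ?me"
    show "connected_mg V (insert g T) ends"
      unfolding connected_mg_def
    proof (intro conjI ballI)
      show "V \<noteq> {}" using c by (auto simp: connected_mg_def)
    next
      fix u v assume "u \<in> V" "v \<in> V"
      then have "reach T ?me (?m u) (?m v)" using c by (auto simp: connected_mg_def)
      from RM2[where x=x and y=y and ends=ends and g=g, OF g this refl refl]
      show "reach (insert g T) ends u v" .
    qed
  qed
  have acyc: "acyclic_mg (insert g T) ends = acyclic_mg T ?me"
  proof
    assume a: "acyclic_mg (insert g T) ends"
    show "acyclic_mg T ?me" unfolding acyclic_mg_def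
    proof
      fix e assume eT: "e \<in> T"
      show "\<not> reach (T - {e}) ?me (fst (?me e)) (snd (?me e))"
      proof
        assume r: "reach (T - {e}) ?me (fst (?me e)) (snd (?me e))"
        have "reach (insert g (T - {e})) ends (fst (ends e)) (snd (ends e))"
          using RM2[where x=x and y=y and ends=ends and g=g, OF g r] by simp
        moreover have "insert g (T - {e}) = insert g T - {e}" using eT gT by auto
        ultimately show False using a eT unfolding acyclic_mg_def by auto
      qed
    qed
  next
    assume a: "acyclic_mg T ?me"
    show "acyclic_mg (insert g T) ends" unfolding acyclic_mg_def
    proof
      fix e assume eT: "e \<in> insert g T"
      show "\<not> reach (insert g T - {e}) ends (fst (ends e)) (snd (ends e))"
      proof (cases "e = g")
        case False
        then have eT': "e \<in> T" using eT by auto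
        show ?thesis
        proof
          assume r: "reach (insert g T - {e}) ends (fst (ends e)) (snd (ends e))"
          have "insert g (T - {e}) = insert g T - {e}" using False by auto
          then have "reach (T - {e}) ?me (?m (fst (ends e))) (?m (snd (ends e)))"
            using RM1[where x=x and y=y and ends=ends and g=g and T="T - {e}", OF g] r by simp
          then show False using a eT' unfolding acyclic_mg_def by simp
        qed
      next
        case True
        show ?thesis
        proof
          assume r: "reach (insert g T - {e}) ends (fst (ends e)) (snd (ends e))"
          have Tg: "insert g T - {e} = T" using True gT by auto
          let ?a = "fst (ends g)" and ?b = "snd (ends g)"
          have ab: "?a \<noteq> ?b" using g xy by auto
          have rab: "reach T ends ?a ?b" using r Tg True by simp
          obtain e' z where e': "e' \<in> T" "ends e' = (?a,z) \<or> ends e' = (z,?a)"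
            and rz: "reach (T - {e'}) ends z ?b"
            using first_edge[OF fin rab ab] by blast
          have "reach (T - {e'}) ?me (?m z) (?m ?b)" using reach_map[OF rz] .
          moreover have "?m ?b = ?m ?a" using g by (elim disjE) (simp_all add: merge_def)
          ultimately have "reach (T - {e'}) ?me (?m z) (?m ?a)" by simp
          then have r2: "reach (T - {e'}) ?me (?m z) (?m ?a)" "reach (T - {e'}) ?me (?m ?a) (?m z)"
            using reach_sym[of "T - {e'}" ?me "?m z" "?m ?a"] by simp_all
          have "reach (T - {e'}) ?me (fst (?me e')) (snd (?me e'))"
            using e'(2) proof (elim disjE)
            assume "ends e' = (?a, z)" then show ?thesis using r2(2) by simp
          next
            assume "ends e' = (z, ?a)" then show ?thesis using r2(1) by simp
          qed
          then show False using a e'(1) unfolding acyclic_mg_def by blast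
        qed
      qed
    qed
  qed
  show ?thesis unfolding spanning_tree_def conn acyc using sub TF by blast
qed

lemma finite_trees: "finite F \<Longrightarrow> finite {T. spanning_tree V F ends T}"
  by (rule finite_subset[of _ "Pow F"]) (auto simp: spanning_tree_def)

lemma deletion_contraction:
  assumes mg: "mgraph V F ends" and gF: "g \<in> F"
    and g: "ends g = (x,y) \<or> ends g = (y,x)" and xy: "x \<noteq> y"
  shows "ntrees V F ends = ntrees V (F - {g}) ends
     + ntrees (merge x y ` V) (F - {g}) (\<lambda>e. map_prod (merge x y) (merge x y) (ends e))"
proof -
  let ?me = "\<lambda>e. map_prod (merge x y) (merge x y) (ends e)"
  have finF: "finite F" using mg by (simp add: mgraph_def)
  have spl: "{T. spanning_tree V F ends T} =
     {T. spanning_tree V (F - {g}) ends T} \<union> insert g ` {T. spanning_tree (merge x y ` V) (F - {g}) ?me T}"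
  proof (intro equalityI subsetI)
    fix T assume "T \<in> {T. spanning_tree V F ends T}"
    then have st: "spanning_tree V F ends T" by simp
    show "T \<in> {T. spanning_tree V (F - {g}) ends T} \<union> insert g ` {T. spanning_tree (merge x y ` V) (F - {g}) ?me T}"
    proof (cases "g \<in> T")
      case False
      then have "spanning_tree V (F - {g}) ends T" using st by (auto simp: spanning_tree_def)
      then show ?thesis by simp
    next
      case True
      have TF: "T - {g} \<subseteq> F - {g}" using st by (auto simp: spanning_tree_def)
      have fT: "finite (T - {g})" using TF finF finite_subset by blast
      have "insert g (T - {g}) = T" using True by auto
      then have "spanning_tree (merge x y ` V) (F - {g}) ?me (T - {g})"
        using contract_tree[where x=x and y=y and V=V and ends=ends and g=g and F=F, OF gF g xy TF fT] st by simp
      then show ?thesis using True by (auto intro!: image_eqI[of T "insert g" "T - {g}"])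
    qed
  next
    fix T assume "T \<in> {T. spanning_tree V (F - {g}) ends T} \<union> insert g ` {T. spanning_tree (merge x y ` V) (F - {g}) ?me T}"
    then show "T \<in> {T. spanning_tree V F ends T}"
    proof
      assume "T \<in> {T. spanning_tree V (F - {g}) ends T}"
      then show ?thesis by (auto simp: spanning_tree_def)
    next
      assume "T \<in> insert g ` {T. spanning_tree (merge x y ` V) (F - {g}) ?me T}"
      then obtain T' where T': "T = insert g T'" "spanning_tree (merge x y ` V) (F - {g}) ?me T'" by auto
      have TF: "T' \<subseteq> F - {g}" using T'(2) by (auto simp: spanning_tree_def)
      have fT: "finite T'" using TF finF finite_subset by blast
      show ?thesis using contract_tree[where x=x and y=y and V=V and ends=ends and g=g and F=F, OF gF g xy TF fT] T' by simp
    qed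
  qed
  have disj: "{T. spanning_tree V (F - {g}) ends T} \<inter> insert g ` {T. spanning_tree (merge x y ` V) (F - {g}) ?me T} = {}"
  proof -
    have "g \<notin> T" if "spanning_tree V (F - {g}) ends T" for T using that by (auto simp: spanning_tree_def)
    then show ?thesis by blast
  qed
  have inj: "inj_on (insert g) {T. spanning_tree (merge x y ` V) (F - {g}) ?me T}"
  proof (rule inj_onI)
    fix T1 T2 assume "T1 \<in> {T. spanning_tree (merge x y ` V) (F - {g}) ?me T}"
      "T2 \<in> {T. spanning_tree (merge x y ` V) (F - {g}) ?me T}" and eq: "insert g T1 = insert g T2"
    then have "g \<notin> T1" "g \<notin> T2" by (auto simp: spanning_tree_def)
    then show "T1 = T2" using eq by (metis Diff_insert_absorb)
  qed
  have f1: "finite {T. spanning_tree V (F - {g}) ends T}" using finF by (simp add: finite_trees)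
  have f2: "finite {T. spanning_tree (merge x y ` V) (F - {g}) ?me T}" using finF by (simp add: finite_trees)
  have "card {T. spanning_tree V F ends T} = card {T. spanning_tree V (F - {g}) ends T}
     + card (insert g ` {T. spanning_tree (merge x y ` V) (F - {g}) ?me T})"
    unfolding spl by (rule card_Un_disjoint[OF f1 finite_imageI[OF f2] disj])
  also have "card (insert g ` {T. spanning_tree (merge x y ` V) (F - {g}) ?me T})
     = card {T. spanning_tree (merge x y ` V) (F - {g}) ?me T}" by (rule card_image[OF inj])
  finally show ?thesis unfolding ntrees_def .
qed

lemma adj_image: "inj f \<Longrightarrow> adj (f ` T) ends' = adj T (\<lambda>e. ends' (f e))"
  by (auto simp: adj_def fun_eq_iff)

lemma reach_image: "inj f \<Longrightarrow> reach (f ` T) ends' = reach T (\<lambda>e. ends' (f e))"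
  by (simp add: reach_def adj_image)

lemma st_image:
  assumes "inj f"
  shows "spanning_tree V (f ` F) ends' (f ` T) = spanning_tree V F (\<lambda>e. ends' (f e)) T"
proof -
  have "\<And>e. e \<in> T \<Longrightarrow> f ` T - {f e} = f ` (T - {e})" using assms by (auto simp: inj_def)
  then have a: "acyclic_mg (f ` T) ends' = acyclic_mg T (\<lambda>e. ends' (f e))"
    unfolding acyclic_mg_def using assms by (auto simp: reach_image)
  have "(f ` T \<subseteq> f ` F) = (T \<subseteq> F)" using assms by (simp add: inj_image_subset_iff)
  then show ?thesis unfolding spanning_tree_def connected_mg_def a using assms
    by (simp add: reach_image)
qed

lemma ntrees_image:
  assumes "inj f"
  shows "ntrees V (f ` F) ends' = ntrees V F (\<lambda>e. ends' (f e))"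
proof -
  have "{T'. spanning_tree V (f ` F) ends' T'} = image f ` {T. spanning_tree V F (\<lambda>e. ends' (f e)) T}"
  proof (intro equalityI subsetI)
    fix T' assume "T' \<in> {T'. spanning_tree V (f ` F) ends' T'}"
    then have st: "spanning_tree V (f ` F) ends' T'" by simp
    then have "T' \<subseteq> f ` F" by (simp add: spanning_tree_def)
    then obtain T where T: "T' = f ` T" by (meson subset_imageE)
    have "spanning_tree V (f ` F) ends' (f ` T)" using st T by simp
    then have "spanning_tree V F (\<lambda>e. ends' (f e)) T" using st_image[OF assms, of V F ends' T] by simp
    then show "T' \<in> image f ` {T. spanning_tree V F (\<lambda>e. ends' (f e)) T}"
      using T by blast
  next
    fix T' assume "T' \<in> image f ` {T. spanning_tree V F (\<lambda>e. ends' (f e)) T}"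
    then show "T' \<in> {T'. spanning_tree V (f ` F) ends' T'}" using st_image[OF assms] by auto
  qed
  moreover have "inj_on (image f) X" for X using assms by (simp add: inj_on_def inj_image_eq_iff)
  ultimately show ?thesis unfolding ntrees_def by (simp add: card_image)
qed

lemma st_no_loop: "spanning_tree V F ends T \<Longrightarrow> e \<in> T \<Longrightarrow> fst (ends e) \<noteq> snd (ends e)"
  unfolding spanning_tree_def acyclic_mg_def by (metis reach_refl)

lemma ntrees_remove_loop:
  assumes "fst (ends g) = snd (ends g)"
  shows "ntrees V (F - {g}) ends = ntrees V F ends"
proof -
  have "spanning_tree V (F - {g}) ends T = spanning_tree V F ends T" for T
    using st_no_loop[of V F ends T g] assms by (auto simp: spanning_tree_def)
  then show ?thesis by (simp add: ntrees_def)
qed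

lemma connected_remove_redundant:
  assumes "connected_mg V S ends" "e \<in> S" "reach (S - {e}) ends (fst (ends e)) (snd (ends e))"
  shows "connected_mg V (S - {e}) ends"
proof -
  have stp: "adj S ends a b \<Longrightarrow> reach (S - {e}) ends a b" for a b
  proof -
    assume "adj S ends a b"
    then obtain e' where e': "e' \<in> S" "ends e' = (a,b) \<or> ends e' = (b,a)" by (auto simp: adj_def)
    show ?thesis
    proof (cases "e' = e")
      case True
      have r1: "reach (S - {e}) ends (fst (ends e)) (snd (ends e))" by (rule assms(3))
      have r2: "reach (S - {e}) ends (snd (ends e)) (fst (ends e))" using reach_sym[OF r1] .
      show ?thesis using e'(2) True r1 r2 by auto
    next
      case False
      then have "adj (S - {e}) ends a b" using e' by (auto simp: adj_def)
      then show ?thesis by (rule adj_reach)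
    qed
  qed
  have "reach S ends a b \<Longrightarrow> reach (S - {e}) ends a b" for a b
    unfolding reach_def[of S]
  proof (induction rule: rtranclp_induct)
    case base then show ?case by simp
  next
    case (step y z)
    have "reach (S - {e}) ends y z" using step.hyps(2) by (rule stp)
    then show ?case by (rule reach_trans[OF step.IH])
  qed
  then show ?thesis using assms(1) by (auto simp: connected_mg_def)
qed

lemma exists_tree_aux:
  "finite S \<Longrightarrow> S \<subseteq> E \<Longrightarrow> connected_mg V S ends \<Longrightarrow> \<exists>T. spanning_tree V E ends T"
proof (induction "card S" arbitrary: S rule: less_induct)
  case less
  show ?case
  proof (cases "acyclic_mg S ends")
    case True then show ?thesis using less.prems by (auto simp: spanning_tree_def)
  next
    case False
    then obtain e where e: "e \<in> S" "reach (S - {e}) ends (fst (ends e)) (snd (ends e))"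
      by (auto simp: acyclic_mg_def)
    have "card (S - {e}) < card S" using card_Diff1_less[OF less.prems(1) e(1)] .
    moreover have "finite (S - {e})" "S - {e} \<subseteq> E" using less.prems by auto
    moreover have "connected_mg V (S - {e}) ends"
      using connected_remove_redundant[OF less.prems(3) e] .
    ultimately show ?thesis using less.hyps by blast
  qed
qed

lemma ntrees_pos:
  assumes "mgraph V E ends" "connected_mg V E ends"
  shows "ntrees V E ends > 0"
proof -
  have fin: "finite E" using assms(1) by (simp add: mgraph_def)
  obtain T where "spanning_tree V E ends T" using exists_tree_aux[OF fin subset_refl assms(2)] by blast
  then have "{T. spanning_tree V E ends T} \<noteq> {}" by blast
  then show ?thesis unfolding ntrees_def using finite_trees[OF fin, of V ends] card_gt_0_iff by blast
qed


lemma det_add_corner: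
  fixes A A' :: "real mat"
  assumes A: "A \<in> carrier_mat n n" and A': "A' \<in> carrier_mat n n" and k: "k < n"
    and ent: "\<And>i j. i < n \<Longrightarrow> j < n \<Longrightarrow> A' $$ (i,j) = A $$ (i,j) + (if i = k \<and> j = k then 1 else 0)"
  shows "det A' = det A + det (mat_delete A k k)"
proof -
  have cof: "cofactor A' k j = cofactor A k j" if j: "j < n" for j
  proof -
    have "mat_delete A' k j = mat_delete A k j"
    proof (rule eq_matI)
      fix i' j' assume "i' < dim_row (mat_delete A k j)" "j' < dim_col (mat_delete A k j)"
      then have "i' < n - 1" "j' < n - 1" using A by auto
      then show "mat_delete A' k j $$ (i', j') = mat_delete A k j $$ (i', j')"
        unfolding mat_delete_def using A A' ent k j by auto
    qed (use A A' in auto)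
    then show ?thesis by (simp add: cofactor_def)
  qed
  have "det A' = (\<Sum>j<n. A' $$ (k,j) * cofactor A' k j)" by (rule laplace_expansion_row[OF A' k])
  also have "\<dots> = (\<Sum>j<n. A $$ (k,j) * cofactor A k j + (if j = k then cofactor A k k else 0))"
    by (rule sum.cong) (auto simp: ent k cof algebra_simps)
  also have "\<dots> = det A + cofactor A k k"
    by (simp add: sum.distrib laplace_expansion_row[OF A k] k)
  also have "cofactor A k k = det (mat_delete A k k)"
    by (simp add: cofactor_def)
  finally show ?thesis .
qed

definition outer :: "real vec \<Rightarrow> real vec \<Rightarrow> real mat" where
  "outer u v = mat (dim_vec u) (dim_vec v) (\<lambda>(i,j). u $ i * v $ j)"

definition colm :: "real vec \<Rightarrow> real mat" where
  "colm w = mat (dim_vec w) 1 (\<lambda>(i,j). w $ i)"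

definition rowm :: "real vec \<Rightarrow> real mat" where
  "rowm v = mat 1 (dim_vec v) (\<lambda>(i,j). v $ j)"

lemma colm_carrier: "colm w \<in> carrier_mat (dim_vec w) 1" unfolding colm_def by (rule mat_carrier)
lemma rowm_carrier: "rowm v \<in> carrier_mat 1 (dim_vec v)" unfolding rowm_def by (rule mat_carrier)
lemma outer_carrier[simp]: assumes "u \<in> carrier_vec n" "v \<in> carrier_vec m"
  shows "outer u v \<in> carrier_mat n m"
proof -
  have "dim_vec u = n" "dim_vec v = m" using assms by auto
  then show ?thesis unfolding outer_def by (metis mat_carrier)
qed

lemma colm_rowm: "colm w * rowm v = outer w v"
  by (rule eq_matI) (simp_all add: colm_def rowm_def outer_def scalar_prod_def)

lemma rowm_colm: "dim_vec v = dim_vec w \<Longrightarrow> rowm v * colm w = mat 1 1 (\<lambda>_. v \<bullet> w)"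
  by (rule eq_matI) (simp_all add: colm_def rowm_def scalar_prod_def)

lemma det_one_plus_outer:
  assumes w: "w \<in> carrier_vec n" and v: "v \<in> carrier_vec n"
  shows "det (1\<^sub>m n + outer w v) = 1 + v \<bullet> w"
proof -
  let ?X = "1\<^sub>m n + outer w v"
  let ?W = "colm w" and ?R = "rowm v"
  have W: "?W \<in> carrier_mat n 1" unfolding colm_def using w by auto
  have R: "?R \<in> carrier_mat 1 n" unfolding rowm_def using v by auto
  have X: "?X \<in> carrier_mat n n" using w v by simp
  let ?M = "four_block_mat (1\<^sub>m n) (- ?W) ?R (1\<^sub>m 1)"
  let ?L1 = "four_block_mat (1\<^sub>m n) (0\<^sub>m n 1) ?R (1\<^sub>m 1)"
  let ?U1 = "four_block_mat (1\<^sub>m n) (- ?W) (0\<^sub>m 1 n) (mat 1 1 (\<lambda>_. 1 + v \<bullet> w))"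
  let ?U2 = "four_block_mat ?X (- ?W) (0\<^sub>m 1 n) (1\<^sub>m 1)"
  have c11: "mat 1 1 (\<lambda>_. 1 + v \<bullet> w) \<in> carrier_mat 1 1" by simp
  have e1: "?L1 * ?U1 = ?M"
  proof -
    have "?L1 * ?U1 = four_block_mat (1\<^sub>m n * 1\<^sub>m n + 0\<^sub>m n 1 * 0\<^sub>m 1 n)
       (1\<^sub>m n * - ?W + 0\<^sub>m n 1 * mat 1 1 (\<lambda>_. 1 + v \<bullet> w))
       (?R * 1\<^sub>m n + 1\<^sub>m 1 * 0\<^sub>m 1 n) (?R * - ?W + 1\<^sub>m 1 * mat 1 1 (\<lambda>_. 1 + v \<bullet> w))"
      by (rule mult_four_block_mat) (use W R in auto)
    also have "?R * - ?W + 1\<^sub>m 1 * mat 1 1 (\<lambda>_. 1 + v \<bullet> w) = 1\<^sub>m 1"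
    proof -
      have "?R * - ?W = - (?R * ?W)" using R W by simp
      also have "?R * ?W = mat 1 1 (\<lambda>_. v \<bullet> w)" using rowm_colm v w by simp
      finally show ?thesis by (intro eq_matI) auto
    qed
    finally show ?thesis using W R by simp
  qed
  have e2: "?U2 * ?L1 = ?M"
  proof -
    have "?U2 * ?L1 = four_block_mat (?X * 1\<^sub>m n + - ?W * ?R) (?X * 0\<^sub>m n 1 + - ?W * 1\<^sub>m 1)
       (0\<^sub>m 1 n * 1\<^sub>m n + 1\<^sub>m 1 * ?R) (0\<^sub>m 1 n * 0\<^sub>m n 1 + 1\<^sub>m 1 * 1\<^sub>m 1)"
      by (rule mult_four_block_mat) (use W R X in auto)
    also have "?X * 1\<^sub>m n + - ?W * ?R = 1\<^sub>m n"
    proof -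
      have "- ?W * ?R = - (?W * ?R)" using R W by simp
      also have "?W * ?R = outer w v" by (rule colm_rowm)
      finally have "?X * 1\<^sub>m n + - ?W * ?R = (1\<^sub>m n + outer w v) + - outer w v"
        using right_mult_one_mat[OF X] by simp
      also have "\<dots> = 1\<^sub>m n" using w v by (intro eq_matI) (auto simp: outer_def)
      finally show ?thesis .
    qed
    also have "?X * 0\<^sub>m n 1 + - ?W * 1\<^sub>m 1 = - ?W"
    proof -
      have "?X * 0\<^sub>m n 1 = 0\<^sub>m n 1" by (rule right_mult_zero_mat[OF X])
      moreover have "- ?W * 1\<^sub>m 1 = - ?W" using W by (intro right_mult_one_mat) auto
      ultimately show ?thesis using W by simp
    qed
    finally show ?thesis using W R X by simp
  qed
  have "det ?L1 = det (1\<^sub>m n) * det (1\<^sub>m 1 :: real mat)"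
    by (rule det_four_block_mat_upper_right_zero[where n=n and m=1]) (use R in auto)
  then have dL1: "det ?L1 = 1" by simp
  have dU1: "det ?U1 = 1 + v \<bullet> w"
  proof -
    have "det ?U1 = det (1\<^sub>m n) * det (mat 1 1 (\<lambda>_. 1 + v \<bullet> w))"
      by (rule det_four_block_mat_lower_left_zero[where n=n and m=1]) (use W in auto)
    also have "det (mat 1 1 (\<lambda>_. 1 + v \<bullet> w)) = 1 + v \<bullet> w"
      by (subst det_single) auto
    finally show ?thesis by simp
  qed
  have "det ?U2 = det ?X * det (1\<^sub>m 1 :: real mat)"
    by (rule det_four_block_mat_lower_left_zero[where n=n and m=1]) (use W X in auto)
  then have dU2: "det ?U2 = det ?X" by simp
  have Lc: "?L1 \<in> carrier_mat (n+1) (n+1)" by (rule four_block_carrier_mat) auto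
  have U1c: "?U1 \<in> carrier_mat (n+1) (n+1)" by (rule four_block_carrier_mat) auto
  have U2c: "?U2 \<in> carrier_mat (n+1) (n+1)" by (rule four_block_carrier_mat[OF X]) auto
  have m1: "det ?M = det ?L1 * det ?U1" unfolding e1[symmetric] by (rule det_mult[OF Lc U1c])
  have m2: "det ?M = det ?U2 * det ?L1" unfolding e2[symmetric] by (rule det_mult[OF U2c Lc])
  from m1 m2 have "det ?U2 * det ?L1 = det ?L1 * det ?U1" by linarith
  then show ?thesis unfolding dL1 dU1 dU2 by simp
qed

lemma outer_mult_left:
  assumes A: "A \<in> carrier_mat n n" and u: "u \<in> carrier_vec n" and v: "v \<in> carrier_vec m"
  shows "A * outer u v = outer (A *\<^sub>v u) v"
  using A u v by (intro eq_matI) (auto simp: outer_def scalar_prod_def sum_distrib_left ac_simps)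

lemma det_rank_one:
  assumes A: "A \<in> carrier_mat n n" and B: "B \<in> carrier_mat n n" and AB: "A * B = 1\<^sub>m n"
    and u: "u \<in> carrier_vec n" and v: "v \<in> carrier_vec n"
  shows "det (A + outer u v) = det A * (1 + v \<bullet> (B *\<^sub>v u))"
proof -
  have Bu: "B *\<^sub>v u \<in> carrier_vec n" using B u by simp
  have "A * (1\<^sub>m n + outer (B *\<^sub>v u) v) = A * 1\<^sub>m n + A * outer (B *\<^sub>v u) v"
    by (rule mult_add_distrib_mat[OF A]) (use Bu v in auto)
  also have "A * outer (B *\<^sub>v u) v = outer (A *\<^sub>v (B *\<^sub>v u)) v" using outer_mult_left[OF A Bu v] .
  also have "A *\<^sub>v (B *\<^sub>v u) = u" using A B u AB by (metis assoc_mult_mat_vec one_mult_mat_vec)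
  finally have eq: "A * (1\<^sub>m n + outer (B *\<^sub>v u) v) = A + outer u v" using A by simp
  have "det (A + outer u v) = det A * det (1\<^sub>m n + outer (B *\<^sub>v u) v)"
    unfolding eq[symmetric] by (rule det_mult[OF A]) (use Bu v in auto)
  also have "det (1\<^sub>m n + outer (B *\<^sub>v u) v) = 1 + v \<bullet> (B *\<^sub>v u)"
    by (rule det_one_plus_outer[OF Bu v])
  finally show ?thesis .
qed


definition bv :: "('e \<Rightarrow> 'v \<times> 'v) \<Rightarrow> 'e \<Rightarrow> 'v \<Rightarrow> real" where
  "bv ends e a = (if a = fst (ends e) then 1 else 0) - (if a = snd (ends e) then 1 else 0)"

definition lapmat :: "'e set \<Rightarrow> ('e \<Rightarrow> 'v \<times> 'v) \<Rightarrow> 'v list \<Rightarrow> real mat" where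
  "lapmat F ends ws = mat (length ws) (length ws)
     (\<lambda>(i,j). \<Sum>e\<in>F. bv ends e (ws!i) * bv ends e (ws!j))"

lemma lapmat_carrier: "lapmat F ends ws \<in> carrier_mat (length ws) (length ws)"
  unfolding lapmat_def by (rule mat_carrier)

lemma lapmat_index: "i < length ws \<Longrightarrow> j < length ws \<Longrightarrow>
  lapmat F ends ws $$ (i,j) = (\<Sum>e\<in>F. bv ends e (ws!i) * bv ends e (ws!j))"
  unfolding lapmat_def by simp

lemma lapmat_dims[simp]: "dim_row (lapmat F ends ws) = length ws" "dim_col (lapmat F ends ws) = length ws"
  unfolding lapmat_def by simp_all

lemma sum_nth_distinct:
  assumes "distinct ws" shows "(\<Sum>j<length ws. f (ws!j)) = sum f (set ws)"
  using sum.reindex_bij_betw[OF bij_betw_nth[OF assms refl refl], of f] by simp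

lemma nth_del:
  assumes "k < length ws" "i < length ws - 1"
  shows "(take k ws @ drop (Suc k) ws) ! i = ws ! (if i < k then i else Suc i)"
  using assms by (auto simp: nth_append min_def)

lemma del_props:
  assumes "distinct ws" "k < length ws"
  shows "distinct (take k ws @ drop (Suc k) ws)"
    "set (take k ws @ drop (Suc k) ws) = set ws - {ws ! k}"
    "length (take k ws @ drop (Suc k) ws) = length ws - 1"
proof -
  have eq: "ws = take k ws @ ws ! k # drop (Suc k) ws" using assms(2) by (rule id_take_nth_drop)
  have d: "distinct (take k ws @ ws ! k # drop (Suc k) ws)" using assms(1) eq by simp
  then show "distinct (take k ws @ drop (Suc k) ws)" by simp
  have "set ws = set (take k ws) \<union> {ws ! k} \<union> set (drop (Suc k) ws)"
    by (subst eq) auto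
  moreover have "ws ! k \<notin> set (take k ws)" "ws ! k \<notin> set (drop (Suc k) ws)" using d by auto
  ultimately show "set (take k ws @ drop (Suc k) ws) = set ws - {ws ! k}" by auto
  show "length (take k ws @ drop (Suc k) ws) = length ws - 1" using assms(2) by simp
qed

lemma bv_merge:
  assumes "a \<noteq> r" "a \<noteq> u"
  shows "bv (\<lambda>e. map_prod (merge r u) (merge r u) (ends e)) e a = bv ends e a"
  using assms by (simp add: bv_def merge_def map_prod_def split: prod.splits)

lemma reach_isolated:
  assumes "\<forall>e\<in>T. fst (ends e) \<noteq> r \<and> snd (ends e) \<noteq> r"
  shows "reach T ends r v \<Longrightarrow> v = r"
  unfolding reach_def
proof (induction rule: rtranclp_induct)
  case base then show ?case by simp
next
  case (step y z)
  then show ?case using assms by (auto simp: adj_def)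
qed


theorem matrix_tree:
  assumes "mgraph V F ends" "r \<in> V" "distinct ws" "set ws = V - {r}"
  shows "det (lapmat F ends ws) = real (ntrees V F ends)"
  using assms
proof (induction "card F" arbitrary: F V ends ws rule: less_induct)
  case less
  have finF: "finite F" and finV: "finite V" using less.prems(1) by (simp_all add: mgraph_def)
  have endsV: "\<And>e. e \<in> F \<Longrightarrow> fst (ends e) \<in> V \<and> snd (ends e) \<in> V"
    using less.prems(1) by (simp add: mgraph_def)
  show ?case
  proof (cases "\<exists>g\<in>F. fst (ends g) = snd (ends g)")
    case True
    then obtain g where g: "g \<in> F" "fst (ends g) = snd (ends g)" by blast
    have bv0: "bv ends g a = 0" for a using g(2) by (simp add: bv_def)
    have eq: "lapmat F ends ws = lapmat (F - {g}) ends ws"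
      by (intro eq_matI) (simp_all add: lapmat_index sum.remove[OF finF g(1)] bv0)
    have cd: "card (F - {g}) < card F" using card_Diff1_less[OF finF g(1)] .
    have mg: "mgraph V (F - {g}) ends" using less.prems(1) by (auto simp: mgraph_def)
    have "det (lapmat (F - {g}) ends ws) = real (ntrees V (F - {g}) ends)"
      using less.hyps[OF cd mg less.prems(2-4)] .
    then show ?thesis using eq ntrees_remove_loop[where ends=ends and g=g and V=V and F=F, OF g(2)] by simp
  next
    case noloop: False
    show ?thesis
    proof (cases "\<exists>g\<in>F. fst (ends g) = r \<or> snd (ends g) = r")
      case True
      then obtain g where gF: "g \<in> F" and gr: "fst (ends g) = r \<or> snd (ends g) = r" by blast
      define u where "u = (if fst (ends g) = r then snd (ends g) else fst (ends g))"
      have gu: "ends g = (r,u) \<or> ends g = (u,r)" using gr unfolding u_def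
        by (cases "ends g") auto
      have ur: "u \<noteq> r" using noloop gF gu by auto
      have uV: "u \<in> V" using endsV[OF gF] gu by auto
      have "u \<in> set ws" using uV ur less.prems(4) by auto
      then obtain k where k: "k < length ws" "ws ! k = u" by (auto simp: in_set_conv_nth)
      let ?n = "length ws"
      let ?M = "lapmat (F - {g}) ends ws"
      let ?M1 = "lapmat F ends ws"
      let ?me = "\<lambda>e. map_prod (merge r u) (merge r u) (ends e)"
      define ws' where "ws' = take k ws @ drop (Suc k) ws"
      have wsr: "ws ! i \<noteq> r" if "i < ?n" for i using less.prems(4) that nth_mem by fastforce
      have wsu: "ws ! i = u \<longleftrightarrow> i = k" if "i < ?n" for i
        using k that less.prems(3) nth_eq_iff_index_eq by metis
      have bvg: "bv ends g (ws ! i) * bv ends g (ws ! j) = (if i = k \<and> j = k then 1 else 0)"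
        if "i < ?n" "j < ?n" for i j
        using gu wsr[OF that(1)] wsr[OF that(2)] wsu[OF that(1)] wsu[OF that(2)]
        by (elim disjE) (auto simp: bv_def)
      have ent: "?M1 $$ (i,j) = ?M $$ (i,j) + (if i = k \<and> j = k then 1 else 0)"
        if "i < ?n" "j < ?n" for i j
        using that by (simp add: lapmat_index sum.remove[OF finF gF] bvg)
      have d1: "det ?M1 = det ?M + det (mat_delete ?M k k)"
        by (rule det_add_corner[OF lapmat_carrier lapmat_carrier k(1) ent])
      have dp: "distinct ws'" "set ws' = set ws - {u}" "length ws' = ?n - 1"
        using del_props[OF less.prems(3) k(1)] k(2) unfolding ws'_def by auto
      have d2: "mat_delete ?M k k = lapmat (F - {g}) ?me ws'"
      proof (rule eq_matI)
        fix i j assume "i < dim_row (lapmat (F - {g}) ?me ws')" "j < dim_col (lapmat (F - {g}) ?me ws')"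
        then have ij: "i < ?n - 1" "j < ?n - 1" using dp(3) by auto
        define i' where "i' = (if i < k then i else Suc i)"
        define j' where "j' = (if j < k then j else Suc j)"
        have i': "i' < ?n" "i' \<noteq> k" and j': "j' < ?n" "j' \<noteq> k"
          using ij unfolding i'_def j'_def by auto
        have ws'i: "ws' ! i = ws ! i'" and ws'j: "ws' ! j = ws ! j'"
          unfolding ws'_def i'_def j'_def using nth_del[OF k(1)] ij by auto
        have "mat_delete ?M k k $$ (i,j) = ?M $$ (i', j')"
          unfolding mat_delete_def i'_def j'_def using ij by simp
        also have "\<dots> = (\<Sum>e\<in>F - {g}. bv ends e (ws ! i') * bv ends e (ws ! j'))"
          using i' j' by (simp add: lapmat_index)
        also have "\<dots> = (\<Sum>e\<in>F - {g}. bv ?me e (ws ! i') * bv ?me e (ws ! j'))"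
        proof -
          have a: "ws ! i' \<noteq> r" "ws ! i' \<noteq> u" "ws ! j' \<noteq> r" "ws ! j' \<noteq> u"
            using wsr wsu i' j' by auto
          show ?thesis using bv_merge[OF a(1,2), of ends] bv_merge[OF a(3,4), of ends] by simp
        qed
        also have "\<dots> = lapmat (F - {g}) ?me ws' $$ (i,j)"
          using ij dp(3) ws'i ws'j by (simp add: lapmat_index)
        finally show "mat_delete ?M k k $$ (i,j) = lapmat (F - {g}) ?me ws' $$ (i,j)" .
      qed (simp_all add: mat_delete_def dp(3))
      have cd: "card (F - {g}) < card F" using card_Diff1_less[OF finF gF] .
      have mg: "mgraph V (F - {g}) ends" using less.prems(1) by (auto simp: mgraph_def)
      have IH1: "det ?M = real (ntrees V (F - {g}) ends)"
        using less.hyps[OF cd mg less.prems(2-4)] .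
      have mV: "merge r u ` V = V - {u}"
      proof
        show "merge r u ` V \<subseteq> V - {u}" using less.prems(2) ur by (auto simp: merge_def)
        show "V - {u} \<subseteq> merge r u ` V"
        proof
          fix x assume "x \<in> V - {u}"
          then have "merge r u x = x" "x \<in> V" by (auto simp: merge_def)
          then show "x \<in> merge r u ` V" by (metis imageI)
        qed
      qed
      have mg2: "mgraph (merge r u ` V) (F - {g}) ?me"
        using less.prems(1) unfolding mgraph_def by auto
      have r2: "r \<in> merge r u ` V" using mV less.prems(2) ur by auto
      have s2: "set ws' = merge r u ` V - {r}" using dp(2) mV less.prems(4) by auto
      have IH2: "det (lapmat (F - {g}) ?me ws') = real (ntrees (merge r u ` V) (F - {g}) ?me)"
        using less.hyps[OF cd mg2 r2 dp(1) s2] .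
      have ru: "r \<noteq> u" using ur by simp
      have DC: "ntrees V F ends = ntrees V (F - {g}) ends + ntrees (merge r u ` V) (F - {g}) ?me"
        by (rule deletion_contraction[OF less.prems(1) gF gu ru])
      show ?thesis using d1 d2 IH1 IH2 DC by simp
    next
      case False
      then have iso: "\<forall>e\<in>F. fst (ends e) \<noteq> r \<and> snd (ends e) \<noteq> r" by blast
      show ?thesis
      proof (cases "ws = []")
        case True
        then have V: "V = {r}" using less.prems(2,4) by auto
        have F: "F = {}"
        proof (rule ccontr)
          assume "F \<noteq> {}"
          then obtain e where "e \<in> F" by blast
          then show False using endsV[of e] iso V by auto
        qed
        have dt: "det (lapmat F ends ws) = 1" using True by (simp add: lapmat_def)
        have st: "spanning_tree V F ends T \<longleftrightarrow> T = {}" for T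
          unfolding spanning_tree_def connected_mg_def acyclic_mg_def using F V by auto
        have "ntrees V F ends = 1" unfolding ntrees_def st by simp
        then show ?thesis using dt by simp
      next
        case False
        let ?n = "length ws"
        have npos: "?n > 0" using False by simp
        let ?one = "vec ?n (\<lambda>_. 1::real)"
        have sumz: "(\<Sum>j<?n. bv ends e (ws ! j)) = 0" if eF: "e \<in> F" for e
        proof -
          have "(\<Sum>j<?n. bv ends e (ws ! j)) = sum (bv ends e) (set ws)"
            by (rule sum_nth_distinct[OF less.prems(3)])
          also have "\<dots> = (\<Sum>w\<in>set ws. (if w = fst (ends e) then 1 else 0))
                         - (\<Sum>w\<in>set ws. (if w = snd (ends e) then 1 else 0))"
            unfolding bv_def by (simp add: sum_subtractf)
          also have "\<dots> = 0" using endsV[OF eF] iso eF less.prems(4) finV by (simp add: sum.delta)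
          finally show ?thesis .
        qed
        have Mv: "lapmat F ends ws *\<^sub>v ?one = 0\<^sub>v ?n"
        proof (rule eq_vecI)
          fix i assume "i < dim_vec (0\<^sub>v ?n :: real vec)"
          then have i: "i < ?n" by simp
          have "(lapmat F ends ws *\<^sub>v ?one) $ i = (\<Sum>j<?n. lapmat F ends ws $$ (i,j))"
            using i by (simp add: scalar_prod_def row_def lapmat_def atLeast0LessThan)
          also have "\<dots> = (\<Sum>j<?n. \<Sum>e\<in>F. bv ends e (ws!i) * bv ends e (ws!j))"
            using i by (simp add: lapmat_index)
          also have "\<dots> = (\<Sum>e\<in>F. bv ends e (ws!i) * (\<Sum>j<?n. bv ends e (ws!j)))"
            by (simp add: sum.swap[of _ "{..<?n}" F] sum_distrib_left)
          also have "\<dots> = 0" using sumz by simp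
          finally show "(lapmat F ends ws *\<^sub>v ?one) $ i = 0\<^sub>v ?n $ i" using i by simp
        qed simp
        have "?one \<noteq> 0\<^sub>v ?n"
        proof
          assume "?one = 0\<^sub>v ?n"
          then have "?one $ 0 = 0\<^sub>v ?n $ 0" by simp
          then show False using npos by simp
        qed
        moreover have "?one \<in> carrier_vec ?n" by simp
        ultimately have dt: "det (lapmat F ends ws) = 0"
          using det_0_iff_vec_prod_zero[OF lapmat_carrier[of F ends ws]] Mv by blast
        have "\<not> spanning_tree V F ends T" for T
        proof
          assume st: "spanning_tree V F ends T"
          have w0: "ws ! 0 \<in> V" "ws ! 0 \<noteq> r" using npos less.prems(4) nth_mem[OF npos] by auto
          then have "reach T ends r (ws ! 0)" using st less.prems(2)
            by (auto simp: spanning_tree_def connected_mg_def)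
          moreover have "\<forall>e\<in>T. fst (ends e) \<noteq> r \<and> snd (ends e) \<noteq> r"
            using st iso by (auto simp: spanning_tree_def)
          ultimately show False using reach_isolated w0(2) by metis
        qed
        then have "ntrees V F ends = 0" by (simp add: ntrees_def)
        then show ?thesis using dt by simp
      qed
    qed
  qed
qed


lemma det_rank_one_sol:
  assumes A: "A \<in> carrier_mat n n" and z: "z \<in> carrier_vec n" and Az: "A *\<^sub>v z = u"
    and u: "u \<in> carrier_vec n" and v: "v \<in> carrier_vec n"
  shows "det (A + outer u v) = det A * (1 + v \<bullet> z)"
proof -
  have "A * (1\<^sub>m n + outer z v) = A * 1\<^sub>m n + A * outer z v"
    by (rule mult_add_distrib_mat[OF A]) (use z v in auto)
  also have "A * outer z v = outer (A *\<^sub>v z) v" using outer_mult_left[OF A z v] .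
  finally have eq: "A * (1\<^sub>m n + outer z v) = A + outer u v" using A Az by simp
  have "det (A + outer u v) = det A * det (1\<^sub>m n + outer z v)"
    unfolding eq[symmetric] by (rule det_mult[OF A]) (use z v in auto)
  also have "det (1\<^sub>m n + outer z v) = 1 + v \<bullet> z"
    by (rule det_one_plus_outer[OF z v])
  finally show ?thesis .
qed

definition chi :: "'v list \<Rightarrow> 'v \<Rightarrow> real vec" where
  "chi ws x = vec (length ws) (\<lambda>i. if ws ! i = x then 1 else 0)"

lemma chi_carrier[simp]: "chi ws x \<in> carrier_vec (length ws)"
  unfolding chi_def by simp

lemma chi_dim[simp]: "dim_vec (chi ws x) = length ws"
  unfolding chi_def by simp

lemma bv_chi: "i < length ws \<Longrightarrow> bv ends e (ws ! i) = (chi ws (fst (ends e)) - chi ws (snd (ends e))) $ i"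
  by (simp add: chi_def bv_def)

lemma add_edge_lapmat:
  assumes fin: "finite F"
  shows "lapmat (insert None (Some ` F)) (case_option (x,y) ends) ws
       = lapmat F ends ws + outer (chi ws x - chi ws y) (chi ws x - chi ws y)"
    (is "?L = ?R")
proof (rule eq_matI)
  fix i j assume "i < dim_row ?R" "j < dim_col ?R"
  then have ij: "i < length ws" "j < length ws" by (simp_all add: outer_def)
  have "None \<notin> Some ` F" by auto
  then have "?L $$ (i,j) = bv (case_option (x,y) ends) None (ws ! i) * bv (case_option (x,y) ends) None (ws ! j)
      + (\<Sum>e\<in>Some ` F. bv (case_option (x,y) ends) e (ws ! i) * bv (case_option (x,y) ends) e (ws ! j))"
    using ij fin by (simp add: lapmat_index)
  also have "(\<Sum>e\<in>Some ` F. bv (case_option (x,y) ends) e (ws ! i) * bv (case_option (x,y) ends) e (ws ! j))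
      = (\<Sum>e\<in>F. bv ends e (ws ! i) * bv ends e (ws ! j))"
    by (subst sum.reindex) (auto simp: bv_def)
  finally show "?L $$ (i,j) = ?R $$ (i,j)"
    using ij by (simp add: lapmat_index outer_def bv_def chi_def)
qed (simp_all add: outer_def)

lemma remove_edge_lapmat:
  assumes fin: "finite F" and eF: "e \<in> F"
  shows "lapmat (F - {e}) ends ws = lapmat F ends ws
     + outer (- (chi ws (fst (ends e)) - chi ws (snd (ends e)))) (chi ws (fst (ends e)) - chi ws (snd (ends e)))"
    (is "?L = ?R")
proof (rule eq_matI)
  fix i j assume "i < dim_row ?R" "j < dim_col ?R"
  then have ij: "i < length ws" "j < length ws" by (simp_all add: outer_def)
  show "?L $$ (i,j) = ?R $$ (i,j)"
    using ij by (simp add: lapmat_index outer_def sum.remove[OF fin eF] bv_chi[OF ij(1)] bv_chi[OF ij(2)] algebra_simps)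
qed (simp_all add: outer_def)

lemma add_edge_ntrees:
  assumes mg: "mgraph V F ends" and x: "x \<in> V" and y: "y \<in> V"
  shows "ntrees V (insert None (Some ` F)) (case_option (x,y) ends) = ntrees V F ends + ntrees_id V F ends x y"
proof -
  let ?Fo = "insert None (Some ` F)" and ?eo = "case_option (x,y) ends"
  have img: "ntrees (merge x y ` V) (Some ` F) (\<lambda>e. map_prod (merge x y) (merge x y) (?eo e))
     = ntrees (merge x y ` V) F (\<lambda>e. map_prod (merge x y) (merge x y) (ends e))"
    using ntrees_image[of Some "merge x y ` V" F "\<lambda>e. map_prod (merge x y) (merge x y) (?eo e)"] by simp
  have img0: "ntrees V (Some ` F) ?eo = ntrees V F ends"
    using ntrees_image[of Some V F ?eo] by simp
  have diff: "?Fo - {None} = Some ` F" by auto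
  show ?thesis
  proof (cases "x = y")
    case True
    have "ntrees V (?Fo - {None}) ?eo = ntrees V ?Fo ?eo"
      by (rule ntrees_remove_loop) (simp add: True)
    then show ?thesis using img0 diff True by (simp add: ntrees_id_def)
  next
    case False
    have mgo: "mgraph V ?Fo ?eo" using mg x y by (auto simp: mgraph_def)
    have "ntrees V ?Fo ?eo = ntrees V (?Fo - {None}) ?eo
       + ntrees (merge x y ` V) (?Fo - {None}) (\<lambda>e. map_prod (merge x y) (merge x y) (?eo e))"
      by (rule deletion_contraction[OF mgo]) (use False in auto)
    then show ?thesis using img img0 diff False
      by (simp add: ntrees_id_def)
  qed
qed


lemma outer_mult_vec:
  assumes u: "u \<in> carrier_vec n" and v: "v \<in> carrier_vec m" and z: "z \<in> carrier_vec m"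
  shows "outer u v *\<^sub>v z = (v \<bullet> z) \<cdot>\<^sub>v u"
  using u v z by (intro eq_vecI) (auto simp: outer_def scalar_prod_def sum_distrib_left ac_simps)

lemma AB_vec:
  fixes A B :: "real mat"
  assumes A: "A \<in> carrier_mat n n" and B: "B \<in> carrier_mat n n" and AB: "A * B = 1\<^sub>m n"
    and x: "x \<in> carrier_vec n"
  shows "A *\<^sub>v (B *\<^sub>v x) = x"
proof -
  have "A *\<^sub>v (B *\<^sub>v x) = (A * B) *\<^sub>v x" using assoc_mult_mat_vec[OF A B x] by simp
  also have "\<dots> = x" using AB x by simp
  finally show ?thesis .
qed

lemma Q_sym:
  fixes B :: "real mat"
  assumes B: "B \<in> carrier_mat n n" and BT: "transpose_mat B = B"
    and u: "u \<in> carrier_vec n" and v: "v \<in> carrier_vec n"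
  shows "u \<bullet> (B *\<^sub>v v) = v \<bullet> (B *\<^sub>v u)"
proof -
  have "u \<bullet> (B *\<^sub>v v) = (transpose_mat B *\<^sub>v u) \<bullet> v"
    using transpose_vec_mult_scalar[OF B v u] by simp
  also have "\<dots> = v \<bullet> (B *\<^sub>v u)" unfolding BT
    by (rule comm_scalar_prod[of _ n]) (use B u v in auto)
  finally show ?thesis .
qed

lemma key_algebra:
  fixes A B :: "real mat"
  assumes A: "A \<in> carrier_mat n n" and B: "B \<in> carrier_mat n n" and AB: "A * B = 1\<^sub>m n"
    and BT: "transpose_mat B = B"
    and b: "b \<in> carrier_vec n" and c: "c \<in> carrier_vec n"
    and g: "1 + c \<bullet> (B *\<^sub>v c) \<noteq> 0"
  shows "det (A + outer c c + outer (- b) b)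
       = det A * ((1 + c \<bullet> (B *\<^sub>v c)) * (1 - b \<bullet> (B *\<^sub>v b)) + (b \<bullet> (B *\<^sub>v c))^2)"
proof -
  define \<gamma> where "\<gamma> = c \<bullet> (B *\<^sub>v c)"
  define \<beta> where "\<beta> = b \<bullet> (B *\<^sub>v b)"
  define \<delta> where "\<delta> = c \<bullet> (B *\<^sub>v b)"
  define l where "l = \<delta> / (1 + \<gamma>)"
  have sym: "b \<bullet> (B *\<^sub>v c) = \<delta>" unfolding \<delta>_def by (rule Q_sym[OF B BT b c])
  have Bb: "B *\<^sub>v b \<in> carrier_vec n" and Bc: "B *\<^sub>v c \<in> carrier_vec n" using B b c by auto
  define z where "z = l \<cdot>\<^sub>v (B *\<^sub>v c) - B *\<^sub>v b"
  have z: "z \<in> carrier_vec n" unfolding z_def using Bb Bc by auto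
  have Az: "A *\<^sub>v z = l \<cdot>\<^sub>v c - b"
  proof -
    have "A *\<^sub>v z = A *\<^sub>v (l \<cdot>\<^sub>v (B *\<^sub>v c)) - A *\<^sub>v (B *\<^sub>v b)"
      unfolding z_def by (rule mult_minus_distrib_mat_vec[OF A]) (use Bb Bc in auto)
    also have "A *\<^sub>v (l \<cdot>\<^sub>v (B *\<^sub>v c)) = l \<cdot>\<^sub>v (A *\<^sub>v (B *\<^sub>v c))" by (rule mult_mat_vec[OF A Bc])
    also have "A *\<^sub>v (B *\<^sub>v c) = c" by (rule AB_vec[OF A B AB c])
    also have "A *\<^sub>v (B *\<^sub>v b) = b" by (rule AB_vec[OF A B AB b])
    finally show ?thesis .
  qed
  have cz: "c \<bullet> z = l * \<gamma> - \<delta>"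
  proof -
    have "c \<bullet> z = c \<bullet> (l \<cdot>\<^sub>v (B *\<^sub>v c)) - c \<bullet> (B *\<^sub>v b)"
      unfolding z_def by (rule scalar_prod_minus_distrib[OF c]) (use Bb Bc in auto)
    then show ?thesis unfolding \<gamma>_def \<delta>_def using c Bc by simp
  qed
  have bz: "b \<bullet> z = l * \<delta> - \<beta>"
  proof -
    have "b \<bullet> z = b \<bullet> (l \<cdot>\<^sub>v (B *\<^sub>v c)) - b \<bullet> (B *\<^sub>v b)"
      unfolding z_def by (rule scalar_prod_minus_distrib[OF b]) (use Bb Bc in auto)
    then show ?thesis unfolding \<beta>_def using b Bc sym by simp
  qed
  let ?A' = "A + outer c c"
  have A': "?A' \<in> carrier_mat n n" using A c by simp
  have A'z: "?A' *\<^sub>v z = - b"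
  proof -
    have "?A' *\<^sub>v z = A *\<^sub>v z + outer c c *\<^sub>v z"
      by (rule add_mult_distrib_mat_vec[OF A]) (use c z in auto)
    also have "outer c c *\<^sub>v z = (c \<bullet> z) \<cdot>\<^sub>v c" by (rule outer_mult_vec[OF c c z])
    finally have eq: "?A' *\<^sub>v z = (l \<cdot>\<^sub>v c - b) + (l * \<gamma> - \<delta>) \<cdot>\<^sub>v c" using Az cz by simp
    have lg: "l + (l * \<gamma> - \<delta>) = 0" unfolding l_def using g \<gamma>_def by (simp add: field_simps)
    show ?thesis unfolding eq
    proof (rule eq_vecI)
      fix i assume "i < dim_vec (- b)"
      then have i: "i < n" using b by simp
      have "l * c $ i - b $ i + (l * \<gamma> - \<delta>) * c $ i = (l + (l * \<gamma> - \<delta>)) * c $ i - b $ i"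
        by (simp add: algebra_simps)
      also have "\<dots> = - b $ i" using lg by simp
      finally show "(l \<cdot>\<^sub>v c - b + (l * \<gamma> - \<delta>) \<cdot>\<^sub>v c) $ i = (- b) $ i" using i b c by simp
    qed (use b c in simp)
  qed
  have mb: "- b \<in> carrier_vec n" using b by simp
  have d1: "det (?A' + outer (- b) b) = det ?A' * (1 + b \<bullet> z)"
    by (rule det_rank_one_sol[OF A' z A'z mb b])
  have d2: "det ?A' = det A * (1 + c \<bullet> (B *\<^sub>v c))"
    by (rule det_rank_one_sol[OF A Bc AB_vec[OF A B AB c] c c])
  have "det (?A' + outer (- b) b) = det A * (1 + \<gamma>) * (1 + l * \<delta> - \<beta>)"
    using d1 d2 bz \<gamma>_def by simp
  also have "\<dots> = det A * ((1 + \<gamma>) * (1 - \<beta>) + \<delta>^2)"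
    unfolding l_def using g \<gamma>_def by (simp add: field_simps power2_eq_square)
  finally show ?thesis unfolding \<gamma>_def \<beta>_def sym by simp
qed


lemma mgraph_add:
  "mgraph V F ends \<Longrightarrow> x \<in> V \<Longrightarrow> y \<in> V \<Longrightarrow> mgraph V (insert None (Some ` F)) (case_option (x,y) ends)"
  by (auto simp: mgraph_def)

lemma mgraph_del: "mgraph V F ends \<Longrightarrow> mgraph V (F - {e}) ends"
  by (auto simp: mgraph_def)

lemma Q_bilin:
  fixes B :: "real mat"
  assumes B: "B \<in> carrier_mat n n" and u1: "u1 \<in> carrier_vec n" and u2: "u2 \<in> carrier_vec n"
    and v1: "v1 \<in> carrier_vec n" and v2: "v2 \<in> carrier_vec n"
  shows "(u1 - u2) \<bullet> (B *\<^sub>v (v1 - v2)) = u1 \<bullet> (B *\<^sub>v v1) - u1 \<bullet> (B *\<^sub>v v2) - u2 \<bullet> (B *\<^sub>v v1) + u2 \<bullet> (B *\<^sub>v v2)"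
proof -
  have w1: "B *\<^sub>v v1 \<in> carrier_vec n" and w2: "B *\<^sub>v v2 \<in> carrier_vec n" using B v1 v2 by auto
  have "B *\<^sub>v (v1 - v2) = B *\<^sub>v v1 - B *\<^sub>v v2" by (rule mult_minus_distrib_mat_vec[OF B v1 v2])
  moreover have "(u1 - u2) \<bullet> (B *\<^sub>v v1 - B *\<^sub>v v2) = u1 \<bullet> (B *\<^sub>v v1 - B *\<^sub>v v2) - u2 \<bullet> (B *\<^sub>v v1 - B *\<^sub>v v2)"
    by (rule minus_scalar_prod_distrib[OF u1 u2]) (use w1 w2 in auto)
  moreover have "u1 \<bullet> (B *\<^sub>v v1 - B *\<^sub>v v2) = u1 \<bullet> (B *\<^sub>v v1) - u1 \<bullet> (B *\<^sub>v v2)"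
    by (rule scalar_prod_minus_distrib[OF u1 w1 w2])
  moreover have "u2 \<bullet> (B *\<^sub>v v1 - B *\<^sub>v v2) = u2 \<bullet> (B *\<^sub>v v1) - u2 \<bullet> (B *\<^sub>v v2)"
    by (rule scalar_prod_minus_distrib[OF u2 w1 w2])
  ultimately show ?thesis by simp
qed

theorem theorem5p3:
  fixes V :: "'v set" and E :: "'e set" and ends :: "'e \<Rightarrow> 'v \<times> 'v"
    and ei :: 'e and p q s t :: 'v
  assumes "mgraph V E ends"
    and "connected_mg V E ends"
    and "ei \<in> E" and "ends ei = (p, q)"
    and "s \<in> V" and "t \<in> V"
  shows "real (ntrees V E ends) * real (ntrees_id V (E - {ei}) ends s t)
       = real (ntrees_id V E ends s t) * real (ntrees V (E - {ei}) ends)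
         + 1/4 * (real (ntrees_id V E ends p s) - real (ntrees_id V E ends q s)
                  - real (ntrees_id V E ends p t) + real (ntrees_id V E ends q t))^2"
proof -
  note mg = assms(1)
  have finV: "finite V" and finE: "finite E" using mg by (simp_all add: mgraph_def)
  have pV: "p \<in> V" and qV: "q \<in> V" using mg assms(3,4) unfolding mgraph_def by force+
  obtain ws where ws: "distinct ws" "set ws = V - {s}"
    using finite_distinct_list[of "V - {s}"] finV by auto
  let ?n = "length ws"
  let ?A = "lapmat E ends ws"
  define \<alpha> where "\<alpha> = real (ntrees V E ends)"
  have Ac: "?A \<in> carrier_mat ?n ?n" by (rule lapmat_carrier)
  have detA: "det ?A = \<alpha>" unfolding \<alpha>_def by (rule matrix_tree[OF mg assms(5) ws])
  have apos: "\<alpha> > 0" unfolding \<alpha>_def using ntrees_pos[OF assms(1,2)] by simp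
  have adjc: "adj_mat ?A \<in> carrier_mat ?n ?n" by (rule adj_mat(1)[OF Ac])
  define B where "B = (1/\<alpha>) \<cdot>\<^sub>m adj_mat ?A"
  have Bc: "B \<in> carrier_mat ?n ?n" unfolding B_def using adjc by simp
  have AB: "?A * B = 1\<^sub>m ?n"
  proof -
    have "?A * B = (1/\<alpha>) \<cdot>\<^sub>m (?A * adj_mat ?A)" unfolding B_def by (rule mult_smult_distrib[OF Ac adjc])
    also have "?A * adj_mat ?A = det ?A \<cdot>\<^sub>m 1\<^sub>m ?n" by (rule adj_mat(2)[OF Ac])
    finally show ?thesis using detA apos by (intro eq_matI) auto
  qed
  have AT: "transpose_mat ?A = ?A"
    by (intro eq_matI) (auto simp: lapmat_index mult.commute)
  have BT: "transpose_mat B = B"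
  proof -
    have BTA: "transpose_mat B * ?A = 1\<^sub>m ?n"
    proof -
      have "transpose_mat B * ?A = transpose_mat B * transpose_mat ?A" using AT by simp
      also have "\<dots> = transpose_mat (?A * B)" by (rule transpose_mult[OF Ac Bc, symmetric])
      finally show ?thesis using AB by simp
    qed
    have BTc: "transpose_mat B \<in> carrier_mat ?n ?n" using Bc by simp
    have "transpose_mat B = transpose_mat B * (?A * B)" using AB BTc by simp
    also have "\<dots> = (transpose_mat B * ?A) * B" using assoc_mult_mat[OF BTc Ac Bc] by simp
    also have "\<dots> = B" using BTA Bc by simp
    finally show ?thesis .
  qed
  define P where "P x y = chi ws x \<bullet> (B *\<^sub>v chi ws y)" for x y
  have Psym: "P x y = P y x" for x y unfolding P_def by (rule Q_sym[OF Bc BT]) auto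
  have Qexp: "(chi ws x1 - chi ws x2) \<bullet> (B *\<^sub>v (chi ws y1 - chi ws y2))
      = P x1 y1 - P x1 y2 - P x2 y1 + P x2 y2" for x1 x2 y1 y2
    unfolding P_def by (rule Q_bilin[OF Bc]) auto
  have F1: "real (ntrees_id V E ends x y) = \<alpha> * (P x x - P x y - P y x + P y y)"
    if x: "x \<in> V" and y: "y \<in> V" for x y
  proof -
    let ?d = "chi ws x - chi ws y"
    have dc: "?d \<in> carrier_vec ?n" by simp
    have "det (lapmat (insert None (Some ` E)) (case_option (x,y) ends) ws)
        = real (ntrees V (insert None (Some ` E)) (case_option (x,y) ends))"
      by (rule matrix_tree[OF mgraph_add[OF mg x y] assms(5) ws])
    also have "\<dots> = \<alpha> + real (ntrees_id V E ends x y)"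
      unfolding \<alpha>_def using add_edge_ntrees[OF mg x y] by simp
    finally have e1: "det (?A + outer ?d ?d) = \<alpha> + real (ntrees_id V E ends x y)"
      using add_edge_lapmat[OF finE, of x y ends ws] by simp
    have "det (?A + outer ?d ?d) = det ?A * (1 + ?d \<bullet> (B *\<^sub>v ?d))"
      by (rule det_rank_one_sol[OF Ac _ AB_vec[OF Ac Bc AB dc] dc dc]) (use Bc in simp)
    then have "real (ntrees_id V E ends x y) = \<alpha> * (?d \<bullet> (B *\<^sub>v ?d))"
      using e1 detA by (simp add: algebra_simps)
    then show ?thesis using Qexp by simp
  qed
  let ?b = "chi ws p - chi ws q"
  have bc: "?b \<in> carrier_vec ?n" by simp
  have finE': "finite (E - {ei})" using finE by simp
  have H: "real (ntrees V (E - {ei}) ends) + real (ntrees_id V (E - {ei}) ends x y)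
      = \<alpha> * ((1 + (P x x - P x y - P y x + P y y)) * (1 - (P p p - P p q - P q p + P q q))
              + (P p x - P p y - P q x + P q y)^2)"
    if x: "x \<in> V" and y: "y \<in> V" for x y
  proof -
    let ?c = "chi ws x - chi ws y"
    have cc: "?c \<in> carrier_vec ?n" by simp
    have mg': "mgraph V (E - {ei}) ends" by (rule mgraph_del[OF mg])
    have "det (lapmat (insert None (Some ` (E - {ei}))) (case_option (x,y) ends) ws)
        = real (ntrees V (insert None (Some ` (E - {ei}))) (case_option (x,y) ends))"
      by (rule matrix_tree[OF mgraph_add[OF mg' x y] assms(5) ws])
    also have "\<dots> = real (ntrees V (E - {ei}) ends) + real (ntrees_id V (E - {ei}) ends x y)"
      using add_edge_ntrees[OF mg' x y] by simp
    finally have e1: "det (lapmat (E - {ei}) ends ws + outer ?c ?c)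
        = real (ntrees V (E - {ei}) ends) + real (ntrees_id V (E - {ei}) ends x y)"
      using add_edge_lapmat[OF finE', of x y ends ws] by simp
    have rem: "lapmat (E - {ei}) ends ws = ?A + outer (- ?b) ?b"
      using remove_edge_lapmat[OF finE assms(3), of ends ws] assms(4) by simp
    have o1: "outer (- ?b) ?b \<in> carrier_mat ?n ?n" and o2: "outer ?c ?c \<in> carrier_mat ?n ?n"
      using bc cc by simp_all
    have reord: "lapmat (E - {ei}) ends ws + outer ?c ?c = ?A + outer ?c ?c + outer (- ?b) ?b"
      unfolding rem using Ac o1 o2 by (simp add: comm_add_mat[OF o1 o2])
    have Fc: "real (ntrees_id V E ends x y) = \<alpha> * (?c \<bullet> (B *\<^sub>v ?c))"
      using F1[OF x y] Qexp by simp
    have "?c \<bullet> (B *\<^sub>v ?c) \<ge> 0"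
    proof -
      have "\<alpha> * (?c \<bullet> (B *\<^sub>v ?c)) \<ge> 0" using Fc[symmetric] by simp
      then show ?thesis using apos by (simp add: zero_le_mult_iff)
    qed
    then have g: "1 + ?c \<bullet> (B *\<^sub>v ?c) \<noteq> 0" by simp
    have "det (?A + outer ?c ?c + outer (- ?b) ?b)
        = det ?A * ((1 + ?c \<bullet> (B *\<^sub>v ?c)) * (1 - ?b \<bullet> (B *\<^sub>v ?b)) + (?b \<bullet> (B *\<^sub>v ?c))^2)"
      by (rule key_algebra[OF Ac Bc AB BT bc cc g])
    then show ?thesis using e1 reord detA Qexp by simp
  qed
  have H0: "real (ntrees V (E - {ei}) ends) = \<alpha> * (1 - (P p p - P p q - P q p + P q q))"
    using H[OF assms(5) assms(5)] by (simp add: ntrees_id_def)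
  show ?thesis
  proof (cases "s = t")
    case True
    then show ?thesis by (simp add: ntrees_id_def)
  next
    case False
    have Hst: "real (ntrees_id V (E - {ei}) ends s t)
       = \<alpha> * ((1 + (P s s - P s t - P t s + P t t)) * (1 - (P p p - P p q - P q p + P q q))
              + (P p s - P p t - P q s + P q t)^2) - \<alpha> * (1 - (P p p - P p q - P q p + P q q))"
      using H[OF assms(5,6)] H0 by simp
    show ?thesis
      unfolding Hst H0 \<alpha>_def[symmetric] F1[OF assms(5,6)] F1[OF pV assms(5)] F1[OF qV assms(5)]
        F1[OF pV assms(6)] F1[OF qV assms(6)]
      using Psym[of s p] Psym[of s q] Psym[of t p] Psym[of t q] Psym[of t s] Psym[of q p]
      by (simp add: algebra_simps power2_eq_square)
  qed
qed


end
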